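(* Under the three-receiver coding module below, for any $t>0$, the transmission in any slot from $1$ to $t$ does not involve any packet with index greater than $m(t)+1$, where $m(t)$ is the maximum rank among the three receivers at the beginning of slot $t$.
   Context: A sender broadcasts packets $\mathbf{p}_1,\mathbf{p}_2,\dots$ (indexed by arrival order, vectors over $\mathbb{F}_3$) to three receivers $1,2,3$ over a slotted erasure broadcast channel; each slot it transmits at most one linear combination of arrived packets, each receiver either receives it or suffers an erasure, and perfect feedback gives the sender every receiver's knowledge. The rank of a receiver is the dimension of the space of linear combinations it knows. Receiver $i$ has heard of a packet if it knows some linear combination involving that packet (with nonzero coefficient); $H_i$ is the set of packets it has heard of and $D_i$ the set it has decoded. "Oldest" means smallest index. Coding module: labels $L,N,D$ form a permutation of $\{1,2,3\}$; initially $L=1,N=2,D=3,m=0$. Each slot: let $U=\{\mathbf{p}_1,\dots,\mathbf{p}_m\}$ together with $\mathbf{p}_{m+1}$ if it has arrived, and set $S_1=D_N\cap D_D$, $S_2=D_N\cap(H_D\setminus D_D)$, $S_3=D_N\setminus H_D$, $S_4=D_D\setminus D_N$, $S_5=(H_D\setminus D_D)\setminus D_N$, $S_6=U\setminus(H_D\cup D_N)$. Transmit: Case 1 ($\mathbf{p}_{m+1}$ not arrived): if $S_2,S_4$ both nonempty send the sum of their oldest packets; else if $S_3,S_4$ both nonempty send the sum of their oldest packets; else send the oldest packet of the first nonempty set among $S_5,S_6,S_2,S_3,S_4$; if all are empty send nothing. Case 2 ($\mathbf{p}_{m+1}\in S_1$): send $\mathbf{p}_{m+1}$ plus whatever Case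 1 would send. Case 3 ($\mathbf{p}_{m+1}\in S_2$): send $\mathbf{p}_{m+1}+c\mathbf{p}$ with $\mathbf{p}$ the oldest packet of the first nonempty set among $S_4,S_5,S_6$, where $c=1$ unless $\mathbf{p}\in S_5$, in which case $c\in\{1,2\}$ is chosen so that the combination is innovative to receiver $D$. Case 4 ($\mathbf{p}_{m+1}\in S_3$): send $\mathbf{p}_{m+1}+\mathbf{p}$, $\mathbf{p}$ the oldest packet of the first nonempty set among $S_4,S_5,S_6$. Case 5 ($\mathbf{p}_{m+1}\in S_4$): send $\mathbf{p}_{m+1}+\mathbf{p}$, $\mathbf{p}$ the oldest packet of the first nonempty set among $S_2,S_3,S_6$. (In Cases 3–5, if all listed sets are empty, $\mathbf{p}_{m+1}$ is sent alone.) Case 6 (otherwise): send $\mathbf{p}_{m+1}$. After feedback, update $H_i,D_i$, set $m$ to the maximum rank of the three receivers; among receivers that have decoded all of $\mathbf{p}_1,\dots,\mathbf{p}_m$, label the one with lowest index $L$ (if there is none, assign labels arbitrarily); of the other two receivers, if exactly one has nonempty unsolved set $H_i\setminus D_i$, label it $D$ and the other $N$; otherwise assign $D,N$ arbitrarily. *)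

theory Defs
  imports Main "HOL.Vector_Spaces" "HOL-Library.Function_Algebras"
begin

text \<open>A linear combination of packets p_1, p_2, ... is represented by its coefficient
  vector v :: nat => 'f, where v j is the coefficient of packet p_j (index 0 unused).
  Receivers are 1, 2, 3.  The knowledge of a receiver is the span of the coefficient
  vectors it has received.\<close>

type_synonym 'f cvec = "nat \<Rightarrow> 'f"

definition fscale :: "'f::field \<Rightarrow> 'f cvec \<Rightarrow> 'f cvec" where
  "fscale c v = (\<lambda>i. c * v i)"

lemma vector_space_fscale: "vector_space (fscale :: 'f::field \<Rightarrow> 'f cvec \<Rightarrow> 'f cvec)"
  by unfold_locales (auto simp: fscale_def fun_eq_iff algebra_simps)

abbreviation kspan :: "'f::field cvec set \<Rightarrow> 'f cvec set" where
  "kspan \<equiv> module.span fscale"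

abbreviation rank :: "'f::field cvec set \<Rightarrow> nat" where
  "rank \<equiv> vector_space.dim fscale"

definition maxrank :: "(nat \<Rightarrow> 'f::field cvec set) \<Rightarrow> nat" where
  "maxrank K = max (rank (K 1)) (max (rank (K 2)) (rank (K 3)))"

definition pk :: "nat \<Rightarrow> 'f::field cvec" where
  "pk j = (\<lambda>k. if k = j then 1 else 0)"

definition heard :: "'f::field cvec set \<Rightarrow> nat set" where
  "heard K = {j. 1 \<le> j \<and> (\<exists>v\<in>K. v j \<noteq> 0)}"

definition decoded :: "'f::field cvec set \<Rightarrow> nat set" where
  "decoded K = {j. 1 \<le> j \<and> pk j \<in> K}"

definition unsolved :: "'f::field cvec set \<Rightarrow> nat set" where
  "unsolved K = heard K - decoded K"

text \<open>Oldest packet of a set = smallest index.\<close>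
definition oldest :: "nat set \<Rightarrow> nat" where
  "oldest S = (LEAST j. j \<in> S)"

fun pick :: "nat set list \<Rightarrow> nat option" where
  "pick [] = None"
| "pick (A # As) = (if A \<noteq> {} then Some (oldest A) else pick As)"

text \<open>Labels are a triple (L, N, D).  K is the knowledge of the receivers, m the
  current value of m, a the number of packets arrived so far (p_j has arrived iff j <= a).\<close>

definition labN :: "nat \<times> nat \<times> nat \<Rightarrow> nat" where "labN lab = fst (snd lab)"
definition labD :: "nat \<times> nat \<times> nat \<Rightarrow> nat" where "labD lab = snd (snd lab)"

definition Uset :: "nat \<Rightarrow> nat \<Rightarrow> nat set" where
  "Uset m a = {1..m} \<union> (if Suc m \<le> a then {Suc m} else {})"

definition S1 :: "(nat \<Rightarrow> 'f::field cvec set) \<Rightarrow> nat \<times> nat \<times> nat \<Rightarrow> nat set" where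
  "S1 K lab = decoded (K (labN lab)) \<inter> decoded (K (labD lab))"
definition S2 :: "(nat \<Rightarrow> 'f::field cvec set) \<Rightarrow> nat \<times> nat \<times> nat \<Rightarrow> nat set" where
  "S2 K lab = decoded (K (labN lab)) \<inter> (heard (K (labD lab)) - decoded (K (labD lab)))"
definition S3 :: "(nat \<Rightarrow> 'f::field cvec set) \<Rightarrow> nat \<times> nat \<times> nat \<Rightarrow> nat set" where
  "S3 K lab = decoded (K (labN lab)) - heard (K (labD lab))"
definition S4 :: "(nat \<Rightarrow> 'f::field cvec set) \<Rightarrow> nat \<times> nat \<times> nat \<Rightarrow> nat set" where
  "S4 K lab = decoded (K (labD lab)) - decoded (K (labN lab))"
definition S5 :: "(nat \<Rightarrow> 'f::field cvec set) \<Rightarrow> nat \<times> nat \<times> nat \<Rightarrow> nat set" where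
  "S5 K lab = (heard (K (labD lab)) - decoded (K (labD lab))) - decoded (K (labN lab))"
definition S6 :: "(nat \<Rightarrow> 'f::field cvec set) \<Rightarrow> nat \<times> nat \<times> nat \<Rightarrow> nat \<Rightarrow> nat \<Rightarrow> nat set" where
  "S6 K lab m a = Uset m a - (heard (K (labD lab)) \<union> decoded (K (labN lab)))"

text \<open>What Case 1 sends (None = nothing is sent).\<close>
definition case1 :: "(nat \<Rightarrow> 'f::field cvec set) \<Rightarrow> nat \<times> nat \<times> nat \<Rightarrow> nat \<Rightarrow> nat \<Rightarrow> 'f cvec option" where
  "case1 K lab m a =
     (if S2 K lab \<noteq> {} \<and> S4 K lab \<noteq> {} then Some (pk (oldest (S2 K lab)) + pk (oldest (S4 K lab)))
      else if S3 K lab \<noteq> {} \<and> S4 K lab \<noteq> {} then Some (pk (oldest (S3 K lab)) + pk (oldest (S4 K lab)))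
      else map_option pk (pick [S5 K lab, S6 K lab m a, S2 K lab, S3 K lab, S4 K lab]))"

text \<open>x is an admissible transmission of the coding module in the current slot
  (the only freedom is the choice of c in Case 3).\<close>
definition tx_ok :: "(nat \<Rightarrow> 'f::field cvec set) \<Rightarrow> nat \<times> nat \<times> nat \<Rightarrow> nat \<Rightarrow> nat \<Rightarrow> 'f cvec option \<Rightarrow> bool" where
  "tx_ok K lab m a x =
    (let q = Suc m in
     if \<not> q \<le> a then x = case1 K lab m a
     else if q \<in> S1 K lab then
       x = Some (pk q + (case case1 K lab m a of None \<Rightarrow> 0 | Some v \<Rightarrow> v))
     else if q \<in> S2 K lab then
       (case pick [S4 K lab, S5 K lab, S6 K lab m a] of
          None \<Rightarrow> x = Some (pk q)
        | Some p \<Rightarrow>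
            (if p \<in> S5 K lab then
               (\<exists>c\<in>{1, 2}. x = Some (pk q + fscale c (pk p)) \<and>
                            pk q + fscale c (pk p) \<notin> K (labD lab))
             else x = Some (pk q + pk p)))
     else if q \<in> S3 K lab then
       x = Some (pk q + (case pick [S4 K lab, S5 K lab, S6 K lab m a] of None \<Rightarrow> 0 | Some p \<Rightarrow> pk p))
     else if q \<in> S4 K lab then
       x = Some (pk q + (case pick [S2 K lab, S3 K lab, S6 K lab m a] of None \<Rightarrow> 0 | Some p \<Rightarrow> pk p))
     else x = Some (pk q))"

definition labels_ok :: "(nat \<Rightarrow> 'f::field cvec set) \<Rightarrow> nat \<Rightarrow> nat \<times> nat \<times> nat \<Rightarrow> bool" where
  "labels_ok K m lab =
    (case lab of (l, n, d) \<Rightarrow>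
      {l, n, d} = {1, 2, 3} \<and>
      (let Full = {i \<in> {1, 2, 3}. {1..m} \<subseteq> decoded (K i)} in
        Full \<noteq> {} \<longrightarrow>
          l = (LEAST i. i \<in> Full) \<and>
          ((unsolved (K n) \<noteq> {}) \<noteq> (unsolved (K d) \<noteq> {}) \<longrightarrow> unsolved (K d) \<noteq> {})))"

text \<open>Slots are t = 1, 2, ...; Kn t i is the knowledge of
  receiver i at the beginning of slot t; x t the transmission in slot t; lab t, mv t the
  labels and m at the beginning of slot t; arr t the number of packets arrived by slot t
  (p_j is available in slot t iff j <= arr t); rcv t i says receiver i receives slot t.\<close>
definition coding_run ::
  "(nat \<Rightarrow> nat) \<Rightarrow> (nat \<Rightarrow> nat \<Rightarrow> bool) \<Rightarrow> (nat \<Rightarrow> nat \<Rightarrow> 'f::field cvec set) \<Rightarrow>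
   (nat \<Rightarrow> 'f cvec option) \<Rightarrow> (nat \<Rightarrow> nat \<times> nat \<times> nat) \<Rightarrow> (nat \<Rightarrow> nat) \<Rightarrow> bool" where
  "coding_run arr rcv Kn x lab mv \<longleftrightarrow>
     (\<forall>i. Kn 1 i = kspan {}) \<and> mv 1 = 0 \<and> lab 1 = (1, 2, 3) \<and>
     (\<forall>t\<ge>1.
        tx_ok (Kn t) (lab t) (mv t) (arr t) (x t) \<and>
        (\<forall>i. Kn (Suc t) i = kspan (Kn t i \<union> (if rcv t i then set_option (x t) else {}))) \<and>
        mv (Suc t) = maxrank (Kn (Suc t)) \<and>
        labels_ok (Kn (Suc t)) (mv (Suc t)) (lab (Suc t)))"

end

theory Submission
  imports Defs
begin

interpretation fs: vector_space fscale by (rule vector_space_fscale)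

definition bnd :: "nat \<Rightarrow> 'f::field cvec \<Rightarrow> bool" where
  "bnd B v = (\<forall>j. v j \<noteq> 0 \<longrightarrow> j \<le> B)"

lemma bnd_0[simp]: "bnd B 0" unfolding bnd_def by simp
lemma bnd_pk: "j \<le> B \<Longrightarrow> bnd B (pk j)" by (simp add: bnd_def pk_def)
lemma bnd_add: "bnd B v \<Longrightarrow> bnd B w \<Longrightarrow> bnd B (v + w)" unfolding bnd_def by (metis add.right_neutral plus_fun_apply)
lemma bnd_scale: "bnd B v \<Longrightarrow> bnd B (fscale c v)" by (auto simp: bnd_def fscale_def)
lemma bnd_mono: "bnd B v \<Longrightarrow> B \<le> C \<Longrightarrow> bnd C v" by (auto simp: bnd_def)

lemma bnd_span: fixes S :: "'f::field cvec set" assumes "\<forall>w\<in>S. bnd B w" "v \<in> kspan S" shows "bnd B v"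
  using assms(2)
proof (induct rule: fs.span_induct_alt)
  case base then show ?case by (simp add: bnd_def)
next
  case (step c x y) then show ?case using assms(1) by (intro bnd_add bnd_scale) auto
qed

lemma oldest_in: "A \<noteq> {} \<Longrightarrow> oldest (A::nat set) \<in> A"
  unfolding oldest_def by (metis LeastI ex_in_conv)

lemma pick_bnd: "\<forall>A\<in>set L. A \<subseteq> {..B} \<Longrightarrow> pick L = Some p \<Longrightarrow> p \<le> B"
proof (induct L)
  case Nil then show ?case by simp
next
  case (Cons A L) then show ?case
    using oldest_in[of A] by (auto split: if_splits)
qed

lemma oldest_bnd: "A \<subseteq> {..B} \<Longrightarrow> A \<noteq> {} \<Longrightarrow> oldest A \<le> B"
  using oldest_in by blast

lemma tx_bound:
  fixes K :: "nat \<Rightarrow> 'f::field cvec set"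
  assumes inv: "\<forall>i v j. v \<in> K i \<and> v j \<noteq> 0 \<longrightarrow> j \<le> Suc m"
    and tx: "tx_ok K lab m a x" and xv: "x = Some v"
  shows "bnd (Suc m) v"
proof -
  have h: "heard (K i) \<subseteq> {..Suc m}" for i using inv by (auto simp: heard_def)
  have d: "decoded (K i) \<subseteq> heard (K i)" for i by (force simp: decoded_def heard_def pk_def)
  have u: "Uset m a \<subseteq> {..Suc m}" by (auto simp: Uset_def)
  note hd = h order_trans[OF d h]
  have s1: "S1 K lab \<subseteq> {..Suc m}" using hd unfolding S1_def by blast
  have s2: "S2 K lab \<subseteq> {..Suc m}" using hd unfolding S2_def by blast
  have s3: "S3 K lab \<subseteq> {..Suc m}" using hd unfolding S3_def by blast
  have s4: "S4 K lab \<subseteq> {..Suc m}" using hd unfolding S4_def by blast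
  have s5: "S5 K lab \<subseteq> {..Suc m}" using hd unfolding S5_def by blast
  have s6: "S6 K lab m a \<subseteq> {..Suc m}" using u unfolding S6_def by blast
  note ss = s1 s2 s3 s4 s5 s6
  have c1: "case1 K lab m a = Some w \<Longrightarrow> bnd (Suc m) w" for w
    unfolding case1_def
    using ss pick_bnd[of "[S5 K lab, S6 K lab m a, S2 K lab, S3 K lab, S4 K lab]" "Suc m"]
    by (auto split: if_splits intro!: bnd_add bnd_pk oldest_bnd)
  have c1': "bnd (Suc m) (case case1 K lab m a of None \<Rightarrow> 0 | Some v \<Rightarrow> v)"
    using c1 by (auto split: option.splits)
  have pA: "pick [S4 K lab, S5 K lab, S6 K lab m a] = Some p \<Longrightarrow> p \<le> Suc m" for p
    using ss pick_bnd[of "[S4 K lab, S5 K lab, S6 K lab m a]" "Suc m" p] by simp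
  have pB: "pick [S2 K lab, S3 K lab, S6 K lab m a] = Some p \<Longrightarrow> p \<le> Suc m" for p
    using ss pick_bnd[of "[S2 K lab, S3 K lab, S6 K lab m a]" "Suc m" p] by simp
  have pA': "bnd (Suc m) (case pick [S4 K lab, S5 K lab, S6 K lab m a] of None \<Rightarrow> 0 | Some p \<Rightarrow> pk p)"
    using pA by (cases "pick [S4 K lab, S5 K lab, S6 K lab m a]") (simp_all del: pick.simps add: bnd_pk)
  have pB': "bnd (Suc m) (case pick [S2 K lab, S3 K lab, S6 K lab m a] of None \<Rightarrow> 0 | Some p \<Rightarrow> pk p)"
    using pB by (cases "pick [S2 K lab, S3 K lab, S6 K lab m a]") (simp_all del: pick.simps add: bnd_pk)
  show ?thesis
    using tx xv c1 c1' pA pA' pB pB'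
    unfolding tx_ok_def Let_def
    by (auto simp del: pick.simps split: if_splits option.splits intro!: bnd_add bnd_pk bnd_scale)
qed

lemma span_un_sub: "kspan (kspan A \<union> X) \<subseteq> kspan (A \<union> (X::'f::field cvec set))"
proof -
  have "kspan A \<union> X \<subseteq> kspan (A \<union> X)"
    using fs.span_mono[of A "A \<union> X"] fs.span_superset[of "A \<union> X"] by blast
  then have "kspan (kspan A \<union> X) \<subseteq> kspan (kspan (A \<union> X))" by (rule fs.span_mono)
  then show ?thesis by (simp add: fs.span_span)
qed

lemma rank_mono:
  fixes V W G :: "'f::field cvec set"
  assumes "V \<subseteq> W" "W \<subseteq> kspan G" "finite G"
  shows "rank V \<le> rank W"
proof -
  obtain A where A: "A \<subseteq> V" "fs.independent A" "V \<subseteq> kspan A" "card A = rank V"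
    by (rule fs.basis_exists)
  obtain B where B: "A \<subseteq> B" "B \<subseteq> W" "fs.independent B" "W \<subseteq> kspan B"
    using fs.maximal_independent_subset_extend[of A W] A assms(1) by blast
  have "card B = rank W" using B fs.basis_card_eq_dim by blast
  moreover have "finite B"
    using fs.independent_span_bound[of G B] B assms by blast
  ultimately show ?thesis using A B card_mono by metis
qed

theorem lemma9:
  fixes arr :: "nat \<Rightarrow> nat" and rcv :: "nat \<Rightarrow> nat \<Rightarrow> bool"
    and Kn :: "nat \<Rightarrow> nat \<Rightarrow> ('f::{field,finite}) cvec set"
    and x :: "nat \<Rightarrow> 'f cvec option" and lab :: "nat \<Rightarrow> nat \<times> nat \<times> nat"
    and mv :: "nat \<Rightarrow> nat" and t :: nat
  assumes "card (UNIV :: 'f set) = 3"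
    and "mono arr"
    and "coding_run arr rcv Kn x lab mv"
    and "0 < t"
  shows "\<forall>s\<in>{1..t}. \<forall>v j. x s = Some v \<and> v j \<noteq> 0 \<longrightarrow> j \<le> maxrank (Kn t) + 1"
proof -
  note cr = assms(3)[unfolded coding_run_def]
  have K1: "Kn 1 i = kspan {}" for i using cr by blast
  have mv1: "mv 1 = 0" using cr by blast
  have TX: "tx_ok (Kn t) (lab t) (mv t) (arr t) (x t)" if "t \<ge> 1" for t using cr that by blast
  have KS: "Kn (Suc t) i = kspan (Kn t i \<union> (if rcv t i then set_option (x t) else {}))"
    if "t \<ge> 1" for t i using cr that by blast
  have MS: "mv (Suc t) = maxrank (Kn (Suc t))" if "t \<ge> 1" for t using cr that by blast
  define G where "G t = {v. \<exists>s. 1 \<le> s \<and> s < t \<and> x s = Some v}" for t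
  have finG: "finite (G t)" for t
  proof -
    have "G t \<subseteq> (\<lambda>s. the (x s)) ` {..<t}" unfolding G_def by force
    then show ?thesis by (rule finite_subset) simp
  qed
  have A: "Kn t i \<subseteq> kspan (G t)" if "t \<ge> 1" for t i
    using that
  proof (induct t rule: dec_induct)
    case base then show ?case using K1 by (simp add: fs.span_empty fs.span_zero)
  next
    case (step n)
    have "Kn (Suc n) i \<subseteq> kspan (kspan (G n) \<union> (if rcv n i then set_option (x n) else {}))"
      using KS[OF step(1)] step(3) fs.span_mono by (metis Un_mono order_refl)
    also have "\<dots> \<subseteq> kspan (G n \<union> (if rcv n i then set_option (x n) else {}))"
      by (rule span_un_sub)
    also have "\<dots> \<subseteq> kspan (G (Suc n))"
      using step(1) by (intro fs.span_mono) (auto simp: G_def)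
    finally show ?case .
  qed
  have B: "Kn t i \<subseteq> Kn (Suc t) i" if "t \<ge> 1" for t i
    using KS[OF that] fs.span_superset by blast
  have C: "maxrank (Kn t) \<le> maxrank (Kn (Suc t))" if "t \<ge> 1" for t
  proof -
    have "rank (Kn t i) \<le> rank (Kn (Suc t) i)" for i
      using rank_mono[OF B[OF that] A[of "Suc t"] finG] that by simp
    then show ?thesis unfolding maxrank_def by (meson max.mono)
  qed
  have D: "mv t = maxrank (Kn t)" if "t \<ge> 1" for t
  proof (cases t)
    case 0 then show ?thesis using that by simp
  next
    case (Suc n)
    show ?thesis
    proof (cases "n = 0")
      case True
      then show ?thesis using Suc mv1 K1 using fs.dim_eq_card[of "{}" "{0}"] fs.independent_empty by (simp add: maxrank_def fs.span_empty)
    next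
      case False then show ?thesis using Suc MS by simp
    qed
  qed
  have E: "maxrank (Kn s) \<le> maxrank (Kn t)" if "1 \<le> s" "s \<le> t" for s t
    using that(2)
  proof (induct t rule: dec_induct)
    case base then show ?case by simp
  next
    case (step n) then show ?case using C[of n] that(1) by simp
  qed
  have F: "\<forall>i v j. v \<in> Kn t i \<and> v j \<noteq> 0 \<longrightarrow> j \<le> Suc (mv t)" if "t \<ge> 1" for t
    using that
  proof (induct t rule: dec_induct)
    case base then show ?case using K1 by (simp add: fs.span_empty)
  next
    case (step n)
    have tb: "bnd (Suc (mv n)) w" if "x n = Some w" for w
      using tx_bound[OF step(3) TX[OF step(1)] that] .
    have mm: "mv n \<le> mv (Suc n)" using C[OF step(1)] D[OF step(1)] D[of "Suc n"] step(1) by simp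
    show ?case
    proof (intro allI impI)
      fix i v j assume h: "v \<in> Kn (Suc n) i \<and> v j \<noteq> 0"
      have "\<forall>w\<in>Kn n i \<union> (if rcv n i then set_option (x n) else {}). bnd (Suc (mv n)) w"
        using step(3) tb by (auto simp: bnd_def split: if_splits)
      then have "bnd (Suc (mv n)) v" using bnd_span h KS[OF step(1)] by blast
      then show "j \<le> Suc (mv (Suc n))" using h mm unfolding bnd_def by fastforce
    qed
  qed
  show ?thesis
  proof (intro ballI allI impI)
    fix s v j assume s: "s \<in> {1..t}" and h: "x s = Some v \<and> v j \<noteq> 0"
    have "bnd (Suc (mv s)) v" using tx_bound[OF F TX h[THEN conjunct1]] s by simp
    then have "j \<le> Suc (mv s)" using h unfolding bnd_def by blast
    moreover have "mv s \<le> maxrank (Kn t)" using D[of s] E[of s t] s by simp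
    ultimately show "j \<le> maxrank (Kn t) + 1" by simp
  qed
qed

end
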